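(* Let $\mathcal A\in\mathbb C^{n\times n}$ be nonsingular and suppose $\mathcal A=\mathcal P_1+\mathcal P_2$, where $\mathcal P_1,\mathcal P_2\in\mathbb C^{n\times n}$ are positive semidefinite (in the sense of the context). Let $\Sigma\in\mathbb C^{n\times n}$ be Hermitian positive definite, and let $\Gamma_{\mathrm{PPS}}$, $\tilde{\mathcal P}_1,\tilde{\mathcal P}_2,\tilde{\mathcal P}_+,\tilde{\mathcal P}_-$, $f$ and $\mathrm{ev}(\cdot)$ be as in the context. For $i=1,2$ and $x\in\mathbb C^n\setminus\{0\}$ define $$m_i(x):=f(\tilde{\mathcal P}_{3-i})\sqrt{\frac{x^*(\mathcal I+\tilde{\mathcal P}_i^*\tilde{\mathcal P}_i)x-x^*(\tilde{\mathcal P}_i+\tilde{\mathcal P}_i^* )x}{x^*(\mathcal I+\tilde{\mathcal P}_i^*\tilde{\mathcal P}_i)x+x^*(\tilde{\mathcal P}_i+\tilde{\mathcal P}_i^* )x}}.$$ Then $m_i(x)\le 1$ for $i=1,2$, and for every $\lambda\in\sigma(\Gamma_{\mathrm{PPS}})$ there exists a vector $x_\lambda\in\mathrm{ev}(\tilde{\mathcal P}_+^{-1}\tilde{\mathcal P}_-)$ such that $$|\lambda|\le\min\{m_1(x_\lambda),m_2(y_\lambda)\},\qquad y_\lambda:=(\mathcal I+\tilde{\mathcal P}_2)^{-1}(\mathcal I-\tilde{\mathcal P}_1)x_\lambda .$$ Consequently $$\rho(\Gamma_{\mathrm{PPS}})\le\max_{x_\lambda\in\mathrm{ev}(\tilde{\mathcal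 P}_+^{-1}\tilde{\mathcal P}_-)}\min\left\{m_1(x_\lambda),\,m_2\big((\mathcal I+\tilde{\mathcal P}_2)^{-1}(\mathcal I-\tilde{\mathcal P}_1)x_\lambda\big)\right\}\le 1.$$
   Context: A matrix $\mathcal P\in\mathbb C^{n\times n}$ is called positive semidefinite if $\mathcal P+\mathcal P^*$ is Hermitian positive semidefinite (HPSD), and positive definite (PD) if $\mathcal P+\mathcal P^*$ is Hermitian positive definite (HPD); $\mathcal P$ need not be Hermitian. $\mathcal I$ is the identity matrix, $\|\cdot\|$ the Euclidean (spectral) norm, $\sigma(\cdot)$ the spectrum, $\rho(\cdot)$ the spectral radius, and $\mathrm{ev}(M)$ denotes the set of all nonzero eigenvectors of a square matrix $M$. For HPD $\Sigma$, $\Sigma^{1/2}$ is its HPD square root. Given the splitting $\mathcal A=\mathcal P_1+\mathcal P_2$ and HPD $\Sigma$, the PPS iteration matrix is $\Gamma_{\mathrm{PPS}}=(\Sigma+\mathcal P_1)^{-1}(\Sigma-\mathcal P_2)(\Sigma+\mathcal P_2)^{-1}(\Sigma-\mathcal P_1)$. Set $\tilde{\mathcal P}_i=\Sigma^{-1/2}\mathcal P_i\Sigma^{-1/2}$ ($i=1,2$), $\tilde{\mathcal P}_+=(\mathcal I+\tilde{\mathcal P}_2)(\mathcal I+\tilde{\mathcal P}_1)$ and $\tilde{\mathcal P}_-=(\mathcal I-\tilde{\mathcal P}_2)(\mathcal I-\tilde{\mathcal P}_1)$. For a square matrix $\mathcal P$ with $\mathcal I+\mathcal P$ invertible, $f(\mathcal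 P):=\|(\mathcal I+\mathcal P)^{-1}(\mathcal I-\mathcal P)\|$. *)

theory Defs
  imports "HOL-Analysis.Analysis"
begin

definition cadj :: "complex^'n^'m \<Rightarrow> complex^'m^'n" where
  "cadj A = (\<chi> i j. cnj (A $ j $ i))"

definition cquad :: "complex^'n^'n \<Rightarrow> complex^'n \<Rightarrow> complex" where
  "cquad M x = (\<Sum>i\<in>UNIV. cnj (x $ i) * (M *v x) $ i)"

definition hpsd_mat :: "complex^'n^'n \<Rightarrow> bool" where
  "hpsd_mat H \<longleftrightarrow> cadj H = H \<and> (\<forall>x. 0 \<le> Re (cquad H x))"

definition hpd_mat :: "complex^'n^'n \<Rightarrow> bool" where
  "hpd_mat H \<longleftrightarrow> cadj H = H \<and> (\<forall>x. x \<noteq> 0 \<longrightarrow> 0 < Re (cquad H x))"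

text \<open>Positive semidefinite in the (non-Hermitian) sense of the paper: P + P^* is HPSD.\<close>
definition psd_gen :: "complex^'n^'n \<Rightarrow> bool" where
  "psd_gen P \<longleftrightarrow> hpsd_mat (P + cadj P)"

definition hpd_sqrt :: "complex^'n^'n \<Rightarrow> complex^'n^'n" where
  "hpd_sqrt S = (THE R. hpd_mat R \<and> R ** R = S)"

definition mat_spectrum :: "complex^'n^'n \<Rightarrow> complex set" where
  "mat_spectrum M = {l. \<exists>v. v \<noteq> 0 \<and> M *v v = l *s v}"

definition spec_radius :: "complex^'n^'n \<Rightarrow> real" where
  "spec_radius M = Max (norm ` mat_spectrum M)"

definition eigvecs :: "complex^'n^'n \<Rightarrow> (complex^'n) set" where
  "eigvecs M = {v. v \<noteq> 0 \<and> (\<exists>l. M *v v = l *s v)}"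

definition spec_norm :: "complex^'n^'n \<Rightarrow> real" where
  "spec_norm M = onorm (\<lambda>x. M *v x)"

definition fmap :: "complex^'n^'n \<Rightarrow> real" where
  "fmap P = spec_norm (matrix_inv (mat 1 + P) ** (mat 1 - P))"

definition Gamma_PPS :: "complex^'n^'n \<Rightarrow> complex^'n^'n \<Rightarrow> complex^'n^'n \<Rightarrow> complex^'n^'n" where
  "Gamma_PPS S P1 P2 = matrix_inv (S + P1) ** (S - P2) ** matrix_inv (S + P2) ** (S - P1)"

text \<open>m_i(x) with Q = tilde P_i and R = tilde P_{3-i}.\<close>
definition mval :: "complex^'n^'n \<Rightarrow> complex^'n^'n \<Rightarrow> complex^'n \<Rightarrow> real" where
  "mval Q R x = fmap R *
     sqrt ((Re (cquad (mat 1 + cadj Q ** Q) x) - Re (cquad (Q + cadj Q) x)) /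
           (Re (cquad (mat 1 + cadj Q ** Q) x) + Re (cquad (Q + cadj Q) x)))"

end

theory Submission
  imports Defs "HOL-Computational_Algebra.Fundamental_Theorem_Algebra"
begin

definition cinner :: "complex^'n \<Rightarrow> complex^'n \<Rightarrow> complex" where
  "cinner x y = (\<Sum>i\<in>UNIV. cnj (x$i) * y$i)"

lemma cquad_cinner: "cquad M x = cinner x (M *v x)"
  by (simp add: cquad_def cinner_def)

lemma Re_cinner: "Re (cinner x y) = inner x y"
  by (simp add: cinner_def inner_vec_def inner_complex_def Re_sum)

lemma cinner_commute: "cinner y x = cnj (cinner x y)"
  by (simp add: cinner_def mult.commute)

lemma cinner_adj: "cinner x (A *v y) = cinner (cadj A *v x) y"
proof -
  have "cinner x (A *v y) = (\<Sum>i\<in>UNIV. \<Sum>j\<in>UNIV. cnj (x$i) * A$i$j * y$j)"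
    by (simp add: cinner_def matrix_vector_mult_def sum_distrib_left mult.assoc)
  also have "\<dots> = (\<Sum>j\<in>UNIV. \<Sum>i\<in>UNIV. cnj (x$i) * A$i$j * y$j)"
    by (rule sum.swap)
  also have "\<dots> = cinner (cadj A *v x) y"
    by (simp add: cinner_def cadj_def matrix_vector_mult_def sum_distrib_right sum_distrib_left mult_ac)
  finally show ?thesis .
qed

lemma cinner_add_right: "cinner x (y + z) = cinner x y + cinner x z"
  by (simp add: cinner_def distrib_left sum.distrib)
lemma cinner_add_left: "cinner (x + y) z = cinner x z + cinner y z"
  by (simp add: cinner_def distrib_right sum.distrib)
lemma cinner_diff_right: "cinner x (y - z) = cinner x y - cinner x z"
  by (simp add: cinner_def right_diff_distrib sum_subtractf)
lemma cinner_diff_left: "cinner (x - y) z = cinner x z - cinner y z"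
  by (simp add: cinner_def left_diff_distrib sum_subtractf)
lemma cinner_smult_right: "cinner x (c *s y) = c * cinner x y"
  by (simp add: cinner_def sum_distrib_left mult_ac)
lemma cinner_smult_left: "cinner (c *s x) y = cnj c * cinner x y"
  by (simp add: cinner_def sum_distrib_left mult_ac)
lemma cinner_zero_left[simp]: "cinner 0 y = 0"
  by (simp add: cinner_def)
lemma cinner_zero_right[simp]: "cinner x 0 = 0"
  by (simp add: cinner_def)

lemma cinner_self: "cinner x x = complex_of_real (norm x ^ 2)"
proof -
  have "Im (cinner x x) = 0"
    by (simp add: cinner_def Im_sum)
  moreover have "Re (cinner x x) = norm x ^ 2"
    by (simp add: Re_cinner power2_norm_eq_inner)
  ultimately show ?thesis by (simp add: complex_eq_iff)
qed

lemma cinner_self_zero: "cinner x x = 0 \<longleftrightarrow> x = 0"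
  by (simp add: cinner_self)

lemma cinner_axis_left: "cinner (axis i 1) w = w $ i"
proof -
  have "(\<lambda>j. cnj ((axis i 1)$j) * w$j) = (\<lambda>j. if j = i then w$j else 0)"
    by (auto simp: axis_def)
  note eq = this
  show ?thesis unfolding cinner_def eq by simp
qed
lemma cinner_axis_right: "cinner w (axis j 1) = cnj (w $ j)"
proof -
  have "(\<lambda>i. cnj (w$i) * (axis j 1)$i) = (\<lambda>i. if i = j then cnj (w$i) else 0)"
    by (auto simp: axis_def)
  note eq = this
  show ?thesis unfolding cinner_def eq by simp
qed
lemma mat_axis: "(A *v axis j 1) $ i = A $ i $ j"
proof -
  have "(\<lambda>k. A $ i $ k * (axis j 1) $ k) = (\<lambda>k. if k = j then A $ i $ k else 0)"
    by (auto simp: axis_def)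
  note eq = this
  show ?thesis unfolding matrix_vector_mult_def vec_lambda_beta eq by simp
qed

lemma cadj_eqI:
  assumes "\<And>x y. cinner x (A *v y) = cinner (B *v x) y"
  shows "cadj A = B"
proof -
  have "A $ i $ j = cnj (B $ j $ i)" for i j
    using assms[of "axis i 1" "axis j 1"]
    by (simp add: cinner_axis_left cinner_axis_right mat_axis)
  then show ?thesis by (simp add: cadj_def vec_eq_iff)
qed

definition herm :: "complex^'n^'n \<Rightarrow> bool" where
  "herm H \<longleftrightarrow> (\<forall>x y. cinner x (H *v y) = cinner (H *v x) y)"

lemma herm_iff: "herm H \<longleftrightarrow> cadj H = H"
  using cadj_eqI[of H H] cinner_adj[of _ H] unfolding herm_def by metis

lemma mvec_smult: "(A::complex^'n^'m) *v (c *s x) = c *s (A *v x)"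
  by (auto simp add: matrix_vector_mult_def vec_eq_iff sum_distrib_left mult_ac intro!: sum.cong)

lemma mat_vec: "mat k *v x = k *s x"
proof -
  have "(\<Sum>j\<in>UNIV. (mat k) $ i $ j * x $ j) = k * x $ i" for i
  proof -
    have "(\<lambda>j. (mat k) $ i $ j * x $ j) = (\<lambda>j. if j = i then k * x $ j else 0)"
      by (auto simp: mat_def)
    note eq = this
    show ?thesis unfolding eq by simp
  qed
  then show ?thesis by (simp add: matrix_vector_mult_def vec_eq_iff)
qed

lemma mvec_neg: "(A::complex^'n^'m) *v (- x) = - (A *v x)"
  using matrix_vector_mult_diff_distrib[of A 0 x] by simp

lemma bl_mvec: "bounded_linear (\<lambda>x. (A::complex^'n^'m) *v x)"
  by (simp add: linear_conv_bounded_linear)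

lemma norm_mvec_onorm: "norm (A *v x) \<le> onorm (\<lambda>x. (A::complex^'n^'m) *v x) * norm x"
  using onorm[OF bl_mvec] by blast

lemma inv_ker:
  fixes A :: "'a::field^'n^'n"
  shows "invertible A \<longleftrightarrow> (\<forall>x. A *v x = 0 \<longrightarrow> x = 0)"
  by (simp add: invertible_left_inverse matrix_left_invertible_ker)

lemma minv:
  assumes "invertible A" shows "A ** matrix_inv A = mat 1 \<and> matrix_inv A ** A = mat 1"
  using assms unfolding matrix_inv_def invertible_def by (rule someI_ex)

lemma minv_left:
  fixes A :: "'a::field^'n^'n"
  assumes "invertible A" shows "matrix_inv A *v (A *v x) = x"
  by (metis assms minv matrix_vector_mul_assoc matrix_vector_mul_lid)

lemma minv_right:
  fixes A :: "'a::field^'n^'n"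
  assumes "invertible A" shows "A *v (matrix_inv A *v x) = x"
  by (metis assms minv matrix_vector_mul_assoc matrix_vector_mul_lid)


lemma cadj_cadj[simp]: "cadj (cadj A) = A"
  by (simp add: cadj_def vec_eq_iff)

definition accr :: "complex^'n^'n \<Rightarrow> bool" where
  "accr P \<longleftrightarrow> (\<forall>x. 0 \<le> inner x (P *v x))"

lemma cinner_cadj_self: "cinner x (cadj Q *v x) = cnj (cinner x (Q *v x))"
  using cinner_adj[of x "cadj Q" x] by (simp add: cinner_commute[of "Q *v x" x])

lemma re_quad_sym: "Re (cquad (Q + cadj Q) x) = 2 * inner x (Q *v x)"
  by (simp add: cquad_cinner matrix_vector_mult_add_rdistrib cinner_add_right
      cinner_cadj_self Re_cinner[symmetric])

lemma re_quad_1: "Re (cquad (mat 1 + cadj Q ** Q) x) = norm x ^ 2 + norm (Q *v x) ^ 2"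
proof -
  have "cinner x (cadj Q *v (Q *v x)) = cinner (Q *v x) (Q *v x)"
    using cinner_adj[of x "cadj Q" "Q *v x"] by simp
  then show ?thesis
    by (simp add: cquad_cinner matrix_vector_mult_add_rdistrib cinner_add_right
      matrix_vector_mul_assoc[symmetric] cinner_self)
qed

lemma psd_accr: "psd_gen P \<Longrightarrow> accr P"
  unfolding psd_gen_def hpsd_mat_def accr_def using re_quad_sym[of P] by force

lemma accr_conj:
  assumes S: "\<And>x y. cinner x (S *v y) = cinner (S *v x) y" and P: "accr P"
  shows "accr (S ** P ** S)"
  unfolding accr_def
proof
  fix x
  have "inner x ((S ** P ** S) *v x) = Re (cinner x (S *v (P *v (S *v x))))"
    by (simp add: Re_cinner matrix_vector_mul_assoc matrix_mul_assoc)
  also have "\<dots> = inner (S *v x) (P *v (S *v x))"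
    by (simp add: S Re_cinner[symmetric])
  finally show "0 \<le> inner x ((S ** P ** S) *v x)"
    using P unfolding accr_def by simp
qed

lemma norm_plus_sq: "norm (x + y) ^ 2 = norm x ^ 2 + norm y ^ 2 + 2 * inner x (y::'a::real_inner)"
  by (simp add: power2_norm_eq_inner inner_add inner_commute)

lemma norm_minus_sq: "norm (x - y) ^ 2 = norm x ^ 2 + norm y ^ 2 - 2 * inner x (y::'a::real_inner)"
  by (simp add: power2_norm_eq_inner inner_diff inner_commute)

lemma ipm: "(mat 1 + Q) *v w = w + Q *v w" "(mat 1 - Q) *v w = w - Q *v w"
  for Q :: "complex^'n^'n"
  by (simp_all add: matrix_vector_mult_add_rdistrib matrix_vector_mult_diff_rdistrib)

lemma cayley_norm:
  assumes "accr Q" shows "norm ((mat 1 - Q) *v w) \<le> norm ((mat 1 + Q) *v w)"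
proof -
  have "0 \<le> inner w (Q *v w)" using assms by (simp add: accr_def)
  then have "norm ((mat 1 - Q) *v w) ^ 2 \<le> norm ((mat 1 + Q) *v w) ^ 2"
    by (simp add: ipm norm_plus_sq norm_minus_sq)
  then show ?thesis by (simp add: power2_le_iff_abs_le)
qed

lemma cayley_inv:
  assumes "accr Q" shows "invertible (mat 1 + Q)"
  unfolding inv_ker
proof (intro allI impI)
  fix w assume "(mat 1 + Q) *v w = 0"
  then have "norm ((mat 1 + Q) *v w) ^ 2 = 0" by simp
  moreover have "0 \<le> inner w (Q *v w)" using assms by (simp add: accr_def)
  ultimately have "norm w ^ 2 = 0"
    unfolding ipm norm_plus_sq by (smt (verit) zero_le_power2)
  then show "w = 0" by simp
qed

lemma cayley_comm:
  "(mat 1 - Q) *v ((mat 1 + Q) *v w) = (mat 1 + Q) *v ((mat 1 - Q) *v (w::complex^'n))"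
  by (simp add: ipm matrix_vector_right_distrib matrix_vector_mult_diff_distrib)

lemma fmap_bound:
  assumes "accr Q"
  shows "norm ((mat 1 - Q) *v w) \<le> fmap Q * norm ((mat 1 + Q) *v w)"
proof -
  have "(matrix_inv (mat 1 + Q) ** (mat 1 - Q)) *v ((mat 1 + Q) *v w) = (mat 1 - Q) *v w"
    by (simp add: matrix_vector_mul_assoc[symmetric] cayley_comm minv_left cayley_inv[OF assms])
  then show ?thesis
    unfolding fmap_def spec_norm_def by (metis norm_mvec_onorm)
qed

lemma fmap_le1:
  fixes Q :: "complex^'n^'n"
  assumes "accr Q" shows "fmap Q \<le> 1"
  unfolding fmap_def spec_norm_def
proof (rule onorm_le)
  fix v :: "complex^'n"
  define w where "w = matrix_inv (mat 1 + Q) *v v"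
  have v: "v = (mat 1 + Q) *v w"
    unfolding w_def by (simp add: minv_right cayley_inv[OF assms])
  have "(matrix_inv (mat 1 + Q) ** (mat 1 - Q)) *v v = (mat 1 - Q) *v w"
    unfolding v
    by (simp add: matrix_vector_mul_assoc[symmetric] cayley_comm minv_left cayley_inv[OF assms])
  then show "norm ((matrix_inv (mat 1 + Q) ** (mat 1 - Q)) *v v) \<le> 1 * norm v"
    using cayley_norm[OF assms, of w] v by simp
qed

lemma fmap_ge0: "0 \<le> fmap Q"
  unfolding fmap_def spec_norm_def by (rule onorm_pos_le[OF bl_mvec])

lemma mval_eq:
  assumes "accr Q"
  shows "mval Q R x = fmap R * (norm ((mat 1 - Q) *v x) / norm ((mat 1 + Q) *v x))"
proof -
  have "Re (cquad (mat 1 + cadj Q ** Q) x) - Re (cquad (Q + cadj Q) x) = norm ((mat 1 - Q) *v x) ^ 2"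
    by (simp add: re_quad_1 re_quad_sym ipm norm_minus_sq)
  moreover have "Re (cquad (mat 1 + cadj Q ** Q) x) + Re (cquad (Q + cadj Q) x) = norm ((mat 1 + Q) *v x) ^ 2"
    by (simp add: re_quad_1 re_quad_sym ipm norm_plus_sq)
  ultimately show ?thesis
    unfolding mval_def by (simp add: real_sqrt_divide)
qed

lemma mval_le1:
  assumes "accr Q" "accr R" shows "mval Q R x \<le> 1"
proof -
  have a: "norm ((mat 1 - Q) *v x) / norm ((mat 1 + Q) *v x) \<le> 1"
    using cayley_norm[OF assms(1), of x] by (simp add: divide_le_eq_1)
  have b: "0 \<le> norm ((mat 1 - Q) *v x) / norm ((mat 1 + Q) *v x)" by simp
  show ?thesis unfolding mval_eq[OF assms(1)]
    using fmap_le1[OF assms(2)] fmap_ge0[of R] a b mult_le_one by (metis times_divide_eq_right)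
qed

lemma mval_ge0:
  assumes "accr Q" shows "0 \<le> mval Q R x"
  unfolding mval_eq[OF assms] using fmap_ge0[of R] by simp


lemma poly_det:
  fixes P :: "'n::finite \<Rightarrow> 'n \<Rightarrow> complex poly"
  shows "poly (det (\<chi> i j. P i j)) x = det (\<chi> i j. poly (P i j) x)"
  unfolding det_def by (simp add: poly_sum poly_prod)

lemma det_scale:
  fixes A :: "complex^'n^'n"
  shows "det (\<chi> i j. k * A$i$j) = k ^ CARD('n) * det A"
  unfolding det_def
  by (simp add: prod.distrib sum_distrib_left mult_ac)

lemma spec_det:
  fixes M :: "complex^'n^'n"
  shows "l \<in> mat_spectrum M \<longleftrightarrow> det (M - mat l) = 0"
proof -
  have "(M - mat l) *v v = M *v v - l *s v" for v
    by (simp add: matrix_vector_mult_diff_rdistrib mat_vec)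
  then have "l \<in> mat_spectrum M \<longleftrightarrow> \<not> invertible (M - mat l)"
    unfolding mat_spectrum_def inv_ker by auto
  then show ?thesis by (simp add: invertible_det_nz)
qed

definition qpoly :: "complex^'n^'n \<Rightarrow> complex poly" where
  "qpoly M = det (\<chi> i j. [: (if i = j then 1 else 0), - M$i$j :])"

definition ppoly :: "complex^'n^'n \<Rightarrow> complex poly" where
  "ppoly M = det (\<chi> i j. [: M$i$j, - (if i = j then 1 else 0) :])"

lemma ppoly_eval: "poly (ppoly M) l = det (M - mat l)"
proof -
  have "(\<chi> i j. poly [: M$i$j, - (if i = j then 1 else 0) :] l) = M - mat l"
    by (simp add: vec_eq_iff mat_def)
  then show ?thesis unfolding ppoly_def poly_det by simp
qed

lemma qpoly_0: "poly (qpoly (M::complex^'n^'n)) 0 = 1"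
proof -
  have "(\<chi> i j. poly [: (if i = j then 1 else 0), - M$i$j :] 0) = (mat 1 :: complex^'n^'n)"
    by (simp add: vec_eq_iff mat_def)
  then show ?thesis unfolding qpoly_def poly_det by simp
qed

lemma qpoly_eval:
  fixes M :: "complex^'n^'n"
  assumes "t \<noteq> 0"
  shows "poly (qpoly M) t = (- t) ^ CARD('n) * det (M - mat (1 / t))"
proof -
  have "(\<chi> i j. poly [: (if i = j then 1 else 0), - M$i$j :] t) =
        (\<chi> i j. (- t) * (M - mat (1 / t))$i$j)"
    using assms by (simp add: vec_eq_iff mat_def algebra_simps)
  note eq = this
  show ?thesis unfolding qpoly_def poly_det eq det_scale ..
qed

lemma qpoly_nz: "qpoly M \<noteq> 0"
  using qpoly_0[of M] by auto

lemma spec_finite: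
  fixes M :: "complex^'n^'n"
  shows "finite (mat_spectrum M)"
proof (rule ccontr)
  assume inf: "\<not> finite (mat_spectrum M)"
  let ?S = "mat_spectrum M - {0}"
  have "infinite ?S" using inf by simp
  moreover have "inj_on (\<lambda>l. 1 / l) ?S" by (auto simp: inj_on_def)
  ultimately have "infinite ((\<lambda>l. 1 / l) ` ?S)" using finite_imageD by blast
  moreover have "(\<lambda>l. 1 / l) ` ?S \<subseteq> {t. poly (qpoly M) t = 0}"
  proof
    fix t assume "t \<in> (\<lambda>l. 1 / l) ` ?S"
    then obtain l where l: "l \<in> ?S" "t = 1 / l" by blast
    then have "det (M - mat l) = 0" using spec_det by blast
    then show "t \<in> {t. poly (qpoly M) t = 0}" using qpoly_eval[of t M] l by simp
  qed
  ultimately have "infinite {t. poly (qpoly M) t = 0}" using finite_subset by blast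
  then show False using poly_roots_finite[OF qpoly_nz] by blast
qed

lemma spec_nonempty:
  fixes M :: "complex^'n^'n"
  shows "mat_spectrum M \<noteq> {}"
proof
  assume emp: "mat_spectrum M = {}"
  have "poly (ppoly M) l \<noteq> 0" for l
  proof -
    have "l \<notin> mat_spectrum M" using emp by auto
    then have "det (M - mat l) \<noteq> 0" using spec_det by blast
    then show ?thesis by (simp add: ppoly_eval)
  qed
  then have "constant (poly (ppoly M))" using fundamental_theorem_of_algebra by blast
  then have c: "poly (ppoly M) l = poly (ppoly M) 0" for l unfolding constant_def by blast
  define c where "c = poly (ppoly M) 0"
  define r where "r = qpoly M - smult c ([:0, -1:] ^ CARD('n))"
  have "poly r t = 0" if "t \<noteq> 0" for t
    using that c[of "1/t"] unfolding r_def c_def by (simp add: qpoly_eval ppoly_eval)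
  then have "- {0} \<subseteq> {t. poly r t = 0}" by auto
  moreover have "infinite (- {0::complex})"
    using infinite_UNIV_char_0[where ?'a=complex] by (metis Compl_eq_Diff_UNIV finite.emptyI finite_Diff2 finite_insert)
  ultimately have "infinite {t. poly r t = 0}" using finite_subset by blast
  then have "r = 0" using poly_roots_finite by blast
  then have "poly r 0 = 0" by simp
  moreover have "poly r 0 = 1" unfolding r_def by (simp add: qpoly_0)
  ultimately show False by simp
qed


lemma scaleR_smult: "c *\<^sub>R (x::complex^'n) = complex_of_real c *s x"
  by (simp add: vec_eq_iff, simp add: scaleR_conv_of_real)

lemma mvec_scaleR: "(A::complex^'n^'m) *v (c *\<^sub>R x) = c *\<^sub>R (A *v x)"
  by (simp add: scaleR_smult mvec_smult)

lemma herm_inner_sym: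
  assumes "herm H" shows "inner x (H *v y) = inner y (H *v x)"
proof -
  have "inner x (H *v y) = Re (cinner (H *v x) y)"
    using assms by (simp add: herm_def Re_cinner[symmetric])
  also have "\<dots> = Re (cinner y (H *v x))"
    by (subst cinner_commute) simp
  finally show ?thesis by (simp add: Re_cinner)
qed

lemma quad_lemma:
  fixes a b :: real
  assumes "\<And>t. 2 * t * a + t\<^sup>2 * b \<le> 0"
  shows "a = 0"
proof (rule ccontr)
  assume a: "a \<noteq> 0"
  define d where "d = \<bar>b\<bar> + 1"
  have d: "d > 0" unfolding d_def by simp
  have "2 * (a / d) * a + (a / d)\<^sup>2 * b \<le> 0" by (rule assms)
  then have "(2 * (a / d) * a + (a / d)\<^sup>2 * b) * d\<^sup>2 \<le> 0"
    using d by (simp add: mult_nonpos_nonneg)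
  moreover have "(2 * (a / d) * a + (a / d)\<^sup>2 * b) * d\<^sup>2 = a\<^sup>2 * (2 * d + b)"
    using d by (simp add: field_simps power2_eq_square)
  moreover have "2 * d + b > 0" unfolding d_def by (cases "b \<ge> 0") auto
  moreover have "a\<^sup>2 > 0" using a by simp
  ultimately show False by (smt (verit) mult_pos_pos)
qed

lemma rayleigh:
  fixes H :: "complex^'n^'n"
  assumes H: "herm H" and S: "subspace S" and inv: "\<And>x. x \<in> S \<Longrightarrow> H *v x \<in> S"
    and ne: "x0 \<in> S" "x0 \<noteq> 0"
  shows "\<exists>v\<in>S. norm v = 1 \<and> H *v v = inner v (H *v v) *\<^sub>R v \<and>
            (\<forall>u\<in>S. inner u (H *v u) \<le> inner v (H *v v) * (norm u)\<^sup>2)"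
proof -
  define f where "f x = inner x (H *v x)" for x
  define K where "K = S \<inter> sphere 0 1"
  have cK: "compact K" unfolding K_def
    using closed_subspace[OF S] compact_sphere by blast
  have neK: "K \<noteq> {}"
  proof -
    have "(1 / norm x0) *\<^sub>R x0 \<in> K"
      unfolding K_def using ne subspace_scale[OF S] by auto
    then show ?thesis by blast
  qed
  have ctK: "continuous_on K f"
    unfolding f_def
    by (intro continuous_intros continuous_on_subset[OF linear_continuous_on[OF bl_mvec]]) auto
  obtain v where vK: "v \<in> K" and vmax: "\<And>y. y \<in> K \<Longrightarrow> f y \<le> f v"
    using continuous_attains_sup[OF cK neK ctK] by blast
  define \<mu> where "\<mu> = f v"
  have vS: "v \<in> S" and nv: "norm v = 1" using vK unfolding K_def by auto
  have fscale: "f (c *\<^sub>R x) = c\<^sup>2 * f x" for c x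
    unfolding f_def by (simp add: mvec_scaleR power2_eq_square)
  have bound: "f u \<le> \<mu> * (norm u)\<^sup>2" if "u \<in> S" for u
  proof (cases "u = 0")
    case True then show ?thesis by (simp add: f_def)
  next
    case False
    have "(1 / norm u) *\<^sub>R u \<in> K"
      unfolding K_def using that False subspace_scale[OF S] by auto
    then have "f ((1 / norm u) *\<^sub>R u) \<le> \<mu>" unfolding \<mu>_def by (rule vmax)
    then have "(1 / norm u)\<^sup>2 * f u \<le> \<mu>" by (simp add: fscale)
    then show ?thesis using False by (simp add: field_simps power2_eq_square)
  qed
  have orth: "inner w (H *v v) - \<mu> * inner w v = 0" if wS: "w \<in> S" for w
  proof (rule quad_lemma[where b = "f w - \<mu> * (norm w)\<^sup>2"])
    fix t :: real
    have "v + t *\<^sub>R w \<in> S" using vS wS S by (simp add: subspace_add subspace_scale)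
    then have "f (v + t *\<^sub>R w) \<le> \<mu> * (norm (v + t *\<^sub>R w))\<^sup>2" by (rule bound)
    moreover have "f (v + t *\<^sub>R w) = \<mu> + 2 * t * inner w (H *v v) + t\<^sup>2 * f w"
      using herm_inner_sym[OF H, of v w]
      unfolding f_def \<mu>_def
      by (simp add: matrix_vector_right_distrib mvec_scaleR inner_add inner_scaleR_left inner_scaleR_right algebra_simps power2_eq_square)
    moreover have "(norm (v + t *\<^sub>R w))\<^sup>2 = 1 + 2 * t * inner w v + t\<^sup>2 * (norm w)\<^sup>2"
      using nv by (simp add: norm_plus_sq inner_commute power_mult_distrib algebra_simps)
    ultimately show "2 * t * (inner w (H *v v) - \<mu> * inner w v) + t\<^sup>2 * (f w - \<mu> * (norm w)\<^sup>2) \<le> 0"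
      by (simp add: algebra_simps)
  qed
  define w where "w = H *v v - \<mu> *\<^sub>R v"
  have "w \<in> S" unfolding w_def using vS inv S by (simp add: subspace_diff subspace_scale)
  then have "inner w (H *v v) - \<mu> * inner w v = 0" by (rule orth)
  then have "inner w w = 0" unfolding w_def by (simp add: inner_diff_right)
  then have "H *v v = \<mu> *\<^sub>R v" unfolding w_def by simp
  then show ?thesis using vS nv bound unfolding \<mu>_def f_def by blast
qed


definition cclosed :: "(complex^'n) set \<Rightarrow> bool" where
  "cclosed S \<longleftrightarrow> (\<forall>c x. x \<in> S \<longrightarrow> c *s x \<in> S)"

definition pmat :: "complex \<Rightarrow> complex^'n \<Rightarrow> complex^'n^'n" where
  "pmat c v = (\<chi> i j. c * (v$i * cnj (v$j)))"

lemma pmat_vec: "pmat c v *v x = (c * cinner v x) *s v"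
  by (simp add: pmat_def matrix_vector_mult_def cinner_def vec_eq_iff sum_distrib_left mult_ac)

lemma subspace_orth: "subspace {x::complex^'n. cinner v x = 0}"
  unfolding subspace_def
  by (simp add: cinner_add_right scaleR_smult cinner_smult_right)

lemma herm_zero: "herm (0::complex^'n^'n)"
  by (simp add: herm_def)

lemma sqrt_ind:
  fixes H :: "complex^'n^'n"
  assumes H: "herm H" and pd: "\<And>x. x \<noteq> 0 \<Longrightarrow> 0 < inner x (H *v x)"
  shows "subspace S \<Longrightarrow> cclosed S \<Longrightarrow> (\<forall>x\<in>S. H *v x \<in> S) \<Longrightarrow>
    \<exists>R. herm R \<and> (\<forall>x. (\<forall>s\<in>S. cinner s x = 0) \<longrightarrow> R *v x = 0) \<and> (\<forall>x. R *v x \<in> S)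
      \<and> (\<forall>x\<in>S. R *v (R *v x) = H *v x) \<and> (\<forall>x. 0 \<le> inner x (R *v x))
      \<and> (\<forall>x\<in>S. x \<noteq> 0 \<longrightarrow> 0 < inner x (R *v x))"
proof (induction "dim S" arbitrary: S rule: less_induct)
  case less
  note S = less.prems(1) and cS = less.prems(2) and invS = less.prems(3)
  show ?case
  proof (cases "S = {0}")
    case True
    show ?thesis
      by (rule exI[of _ 0]) (simp add: herm_zero True)
  next
    case False
    then obtain x0 where x0: "x0 \<in> S" "x0 \<noteq> 0" using subspace_0[OF S] by blast
    obtain v where vS: "v \<in> S" and nv: "norm v = 1"
      and Hv0: "H *v v = inner v (H *v v) *\<^sub>R v"
      using rayleigh[OF H S _ x0] invS by blast
    define \<mu> where "\<mu> = inner v (H *v v)"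
    have v0: "v \<noteq> 0" using nv by auto
    have mupos: "\<mu> > 0" unfolding \<mu>_def using pd[OF v0] .
    have Hv: "H *v v = complex_of_real \<mu> *s v" using Hv0 unfolding \<mu>_def by (simp add: scaleR_smult)
    have vv: "cinner v v = 1" using nv by (simp add: cinner_self)
    define S' where "S' = S \<inter> {x. cinner v x = 0}"
    have S'S: "S' \<subseteq> S" unfolding S'_def by blast
    have subS': "subspace S'" unfolding S'_def using S subspace_orth subspace_inter by blast
    have cS': "cclosed S'" using cS unfolding S'_def cclosed_def by (auto simp: cinner_smult_right)
    have invS': "\<forall>x\<in>S'. H *v x \<in> S'"
    proof
      fix x assume x: "x \<in> S'"
      have "cinner v (H *v x) = cinner (H *v v) x" using H by (simp add: herm_def)
      also have "\<dots> = 0" using x by (simp add: Hv cinner_smult_left S'_def)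
      finally show "H *v x \<in> S'" using x invS unfolding S'_def by blast
    qed
    have "v \<notin> S'" unfolding S'_def using vv by simp
    then have "S' \<subset> S" using S'S vS by blast
    then have "dim S' < dim S"
      using dim_psubset span_eq_iff subS' S by metis
    then obtain R' where hR': "herm R'"
      and zR': "\<And>x. (\<forall>s\<in>S'. cinner s x = 0) \<Longrightarrow> R' *v x = 0"
      and rR': "\<And>x. R' *v x \<in> S'"
      and sqR': "\<And>x. x \<in> S' \<Longrightarrow> R' *v (R' *v x) = H *v x"
      and psR': "\<And>x. 0 \<le> inner x (R' *v x)"
      and pdR': "\<And>x. x \<in> S' \<Longrightarrow> x \<noteq> 0 \<Longrightarrow> 0 < inner x (R' *v x)"
      using less.hyps[OF _ subS' cS' invS'] by blast
    define cs where "cs = complex_of_real (sqrt \<mu>)"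
    have cscnj: "cnj cs = cs" unfolding cs_def by simp
    have cs2: "cs * cs = complex_of_real \<mu>" unfolding cs_def using mupos
      by (simp flip: of_real_mult)
    define R where "R = R' + pmat cs v"
    have Rx: "R *v x = R' *v x + (cs * cinner v x) *s v" for x
      unfolding R_def by (simp add: matrix_vector_mult_add_rdistrib pmat_vec)
    have R'v: "R' *v v = 0"
    proof (rule zR', intro ballI)
      fix s assume "s \<in> S'"
      then have "cinner v s = 0" unfolding S'_def by simp
      then show "cinner s v = 0" by (subst cinner_commute) simp
    qed
    have vR': "cinner v (R' *v x) = 0" for x using rR'[of x] unfolding S'_def by simp
    have herm: "herm R"
      unfolding herm_def
    proof (intro allI)
      fix x y
      have "cinner x (R *v y) = cinner x (R' *v y) + cs * cinner v y * cinner x v"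
        by (simp add: Rx cinner_add_right cinner_smult_right)
      moreover have "cinner (R *v x) y = cinner (R' *v x) y + cnj (cs * cinner v x) * cinner v y"
        by (simp add: Rx cinner_add_left cinner_smult_left)
      moreover have "cnj (cinner v x) = cinner x v" by (subst cinner_commute) simp
      ultimately show "cinner x (R *v y) = cinner (R *v x) y"
        using hR' cscnj unfolding herm_def by (simp add: mult_ac)
    qed
    have zero: "R *v x = 0" if "\<forall>s\<in>S. cinner s x = 0" for x
    proof -
      have "R' *v x = 0" using that S'S by (intro zR') blast
      moreover have "cinner v x = 0" using that vS by blast
      ultimately show ?thesis by (simp add: Rx)
    qed
    have range: "R *v x \<in> S" for x
    proof -
      have "R' *v x \<in> S" using rR' S'S by blast
      moreover have "(cs * cinner v x) *s v \<in> S" using cS vS unfolding cclosed_def by blast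
      ultimately show ?thesis unfolding Rx using subspace_add[OF S] by blast
    qed
    have decomp: "x - cinner v x *s v \<in> S' \<and> R' *v x = R' *v (x - cinner v x *s v)" if xS: "x \<in> S" for x
    proof
      have "cinner v x *s v \<in> S" using cS vS unfolding cclosed_def by blast
      then have "x - cinner v x *s v \<in> S" using xS subspace_diff[OF S] by blast
      moreover have "cinner v (x - cinner v x *s v) = 0"
        by (simp add: cinner_diff_right cinner_smult_right vv)
      ultimately show "x - cinner v x *s v \<in> S'" unfolding S'_def by blast
      show "R' *v x = R' *v (x - cinner v x *s v)"
        by (simp add: matrix_vector_mult_diff_distrib mvec_smult R'v)
    qed
    have sq: "R *v (R *v x) = H *v x" if xS: "x \<in> S" for x
    proof -
      define a where "a = cinner v x"
      define x' where "x' = x - a *s v"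
      have x'S': "x' \<in> S'" and R'x: "R' *v x = R' *v x'"
        using decomp[OF xS] unfolding x'_def a_def by auto
      have xx: "x = x' + a *s v" unfolding x'_def by simp
      have "R *v (R *v x) = R' *v (R' *v x') + (cs * cs * a) *s v"
        by (simp add: Rx R'x a_def[symmetric] matrix_vector_right_distrib mvec_smult R'v
            cinner_add_right cinner_smult_right vR' vv mult_ac)
      also have "\<dots> = H *v x' + (a * complex_of_real \<mu>) *s v"
        by (simp add: sqR'[OF x'S'] cs2 mult_ac)
      also have "\<dots> = H *v x"
        by (simp add: xx matrix_vector_right_distrib mvec_smult Hv vector_smult_assoc)
      finally show ?thesis .
    qed
    have quad: "cinner x (R *v x) = cinner x (R' *v x) + cs * complex_of_real ((norm (cinner v x))\<^sup>2)" for x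
    proof -
      have "cinner x v = cnj (cinner v x)" by (subst cinner_commute) simp
      then have n: "cinner v x * cinner x v = complex_of_real ((norm (cinner v x))\<^sup>2)"
        using complex_norm_square[of "cinner v x"] by simp
      have "cinner x (R *v x) = cinner x (R' *v x) + cs * (cinner v x * cinner x v)"
        by (simp add: Rx cinner_add_right cinner_smult_right mult_ac)
      then show ?thesis unfolding n .
    qed
    have reQ: "inner x (R *v x) = inner x (R' *v x) + sqrt \<mu> * (norm (cinner v x))\<^sup>2" for x
      using arg_cong[OF quad[of x], of Re] unfolding cs_def
      by (simp add: Re_cinner)
    have psd: "0 \<le> inner x (R *v x)" for x
      using psR'[of x] mupos by (simp add: reQ)
    have pdR: "0 < inner x (R *v x)" if xS: "x \<in> S" and nz: "x \<noteq> 0" for x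
    proof -
      define a where "a = cinner v x"
      define x' where "x' = x - a *s v"
      have x'S': "x' \<in> S'" and R'x: "R' *v x = R' *v x'"
        using decomp[OF xS] unfolding x'_def a_def by auto
      have xx: "x = x' + a *s v" unfolding x'_def by simp
      have "cinner x (R' *v x) = cinner x' (R' *v x')"
        by (simp add: R'x) (simp add: xx cinner_add_left cinner_smult_left vR')
      then have e: "inner x (R *v x) = inner x' (R' *v x') + sqrt \<mu> * (norm a)\<^sup>2"
        unfolding reQ a_def by (simp add: Re_cinner[symmetric])
      show ?thesis
      proof (cases "x' = 0")
        case True
        then have "a \<noteq> 0" using nz xx by auto
        then show ?thesis using e psR'[of x'] mupos by (simp add: add_nonneg_pos)
      next
        case False
        then show ?thesis using e pdR'[OF x'S' False] mupos by (simp add: add_pos_nonneg)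
      qed
    qed
    show ?thesis
      using herm zero range sq psd pdR by blast
  qed
qed

lemma hpd_herm: "hpd_mat S \<Longrightarrow> herm S"
  by (simp add: hpd_mat_def herm_iff)

lemma hpd_pd: "hpd_mat S \<Longrightarrow> x \<noteq> 0 \<Longrightarrow> 0 < inner x (S *v x)"
  by (simp add: hpd_mat_def cquad_cinner Re_cinner)

lemma hpd_iff: "hpd_mat S \<longleftrightarrow> herm S \<and> (\<forall>x. x \<noteq> 0 \<longrightarrow> 0 < inner x (S *v x))"
  by (simp add: hpd_mat_def cquad_cinner Re_cinner herm_iff)

lemma sqrt_exists:
  fixes \<Sigma> :: "complex^'n^'n"
  assumes "hpd_mat \<Sigma>"
  shows "\<exists>R. hpd_mat R \<and> R ** R = \<Sigma>"
proof -
  have "cclosed (UNIV :: (complex^'n) set)" by (simp add: cclosed_def)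
  then obtain R where R: "herm R" "\<forall>x. R *v (R *v x) = \<Sigma> *v x"
      "\<forall>x. x \<noteq> 0 \<longrightarrow> 0 < inner x (R *v x)"
    using sqrt_ind[OF hpd_herm[OF assms] hpd_pd[OF assms], of UNIV] by auto
  have "R ** R = \<Sigma>"
    using R(2) by (simp add: matrix_eq matrix_vector_mul_assoc)
  moreover have "hpd_mat R" using R by (simp add: hpd_iff)
  ultimately show ?thesis by blast
qed


lemma exists_nz: "\<exists>x::complex^'n. x \<noteq> 0"
  by (rule exI[of _ "axis undefined 1"]) (simp add: axis_eq_0_iff)

lemma sylv_neg:
  fixes D R1 R2 :: "complex^'n^'n"
  assumes D: "herm D"
    and p1: "\<And>x. x \<noteq> 0 \<Longrightarrow> 0 < inner x (R1 *v x)"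
    and p2: "\<And>x. x \<noteq> 0 \<Longrightarrow> 0 < inner x (R2 *v x)"
    and eq: "\<And>x. R1 *v (D *v x) + D *v (R2 *v x) = 0"
  shows "inner u (D *v u) \<le> 0"
proof -
  obtain x0 :: "complex^'n" where x0: "x0 \<noteq> 0" using exists_nz by blast
  obtain v where nv: "norm v = 1" and Dv0: "D *v v = inner v (D *v v) *\<^sub>R v"
    and bnd: "\<forall>u\<in>UNIV. inner u (D *v u) \<le> inner v (D *v v) * (norm u)\<^sup>2"
    using rayleigh[OF D subspace_UNIV _ _ x0] by blast
  define \<mu> where "\<mu> = inner v (D *v v)"
  have Dv: "D *v v = complex_of_real \<mu> *s v" using Dv0 unfolding \<mu>_def by (simp add: scaleR_smult)
  have v0: "v \<noteq> 0" using nv by auto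
  have "0 = cinner v (R1 *v (D *v v) + D *v (R2 *v v))" using eq[of v] by simp
  also have "\<dots> = cinner v (R1 *v (D *v v)) + cinner (D *v v) (R2 *v v)"
    using D by (simp add: cinner_add_right herm_def)
  also have "\<dots> = complex_of_real \<mu> * (cinner v (R1 *v v) + cinner v (R2 *v v))"
    by (simp add: Dv mvec_smult cinner_smult_right cinner_smult_left distrib_left)
  finally have z: "complex_of_real \<mu> * (cinner v (R1 *v v) + cinner v (R2 *v v)) = 0"
    by (rule sym)
  have "Re (complex_of_real \<mu> * (cinner v (R1 *v v) + cinner v (R2 *v v))) = \<mu> * (inner v (R1 *v v) + inner v (R2 *v v))"
    by (simp add: Re_cinner)
  then have "\<mu> * (inner v (R1 *v v) + inner v (R2 *v v)) = 0"
    using z by simp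
  moreover have "inner v (R1 *v v) + inner v (R2 *v v) > 0"
    using p1[OF v0] p2[OF v0] by simp
  ultimately have "\<mu> = 0" by simp
  then show ?thesis using bnd unfolding \<mu>_def by simp
qed

lemma herm_diff: "herm A \<Longrightarrow> herm B \<Longrightarrow> herm (A - B)"
  by (simp add: herm_def matrix_vector_mult_diff_rdistrib cinner_diff_right cinner_diff_left)

lemma sqrt_unique:
  fixes R1 R2 :: "complex^'n^'n"
  assumes h1: "hpd_mat R1" and h2: "hpd_mat R2" and eq: "R1 ** R1 = R2 ** R2"
  shows "R1 = R2"
proof -
  have e: "R1 *v (R1 *v x) = R2 *v (R2 *v x)" for x
    using eq by (simp add: matrix_vector_mul_assoc)
  have ea: "R1 *v ((R1 - R2) *v x) + (R1 - R2) *v (R2 *v x) = 0" for x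
    by (simp add: matrix_vector_mult_diff_rdistrib matrix_vector_mult_diff_distrib, simp add: e)
  have eb: "R2 *v ((R2 - R1) *v x) + (R2 - R1) *v (R1 *v x) = 0" for x
    by (simp add: matrix_vector_mult_diff_rdistrib matrix_vector_mult_diff_distrib, simp add: e)
  have a: "inner u ((R1 - R2) *v u) \<le> 0" for u
    using sylv_neg[OF herm_diff[OF hpd_herm[OF h1] hpd_herm[OF h2]] hpd_pd[OF h1] hpd_pd[OF h2] ea] .
  have b: "inner u ((R2 - R1) *v u) \<le> 0" for u
    using sylv_neg[OF herm_diff[OF hpd_herm[OF h2] hpd_herm[OF h1]] hpd_pd[OF h2] hpd_pd[OF h1] eb] .
  define D where "D = R1 - R2"
  have hD: "herm D" unfolding D_def using herm_diff[OF hpd_herm[OF h1] hpd_herm[OF h2]] .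
  have f0: "inner u (D *v u) = 0" for u
    using a[of u] b[of u] unfolding D_def
    by (simp add: matrix_vector_mult_diff_rdistrib inner_diff_right)
  have "D *v x = 0" for x
  proof -
    define y where "y = D *v x"
    have "inner (x + y) (D *v (x + y)) = inner x (D *v x) + inner y (D *v y) + inner x (D *v y) + inner y (D *v x)"
      by (simp add: matrix_vector_right_distrib inner_add)
    then have "0 = inner x (D *v y) + inner y (D *v x)" using f0 by simp
    then have "inner y y = 0" using herm_inner_sym[OF hD, of x y] unfolding y_def by simp
    then show ?thesis unfolding y_def by simp
  qed
  then have "D = 0" by (simp add: matrix_eq)
  then show ?thesis unfolding D_def by simp
qed

lemma hpd_sqrt_props:
  fixes \<Sigma> :: "complex^'n^'n"
  assumes "hpd_mat \<Sigma>"
  shows "hpd_mat (hpd_sqrt \<Sigma>) \<and> hpd_sqrt \<Sigma> ** hpd_sqrt \<Sigma> = \<Sigma>"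
proof -
  have "\<exists>!R. hpd_mat R \<and> R ** R = \<Sigma>"
    using sqrt_exists[OF assms] sqrt_unique by metis
  then show ?thesis unfolding hpd_sqrt_def by (rule theI')
qed


lemma norm_smult_vec: "norm (c *s (x::complex^'n)) = cmod c * norm x"
  unfolding norm_vec_def by (simp add: L2_set_right_distrib norm_mult)

lemma inv_inj:
  fixes R :: "complex^'n^'n"
  assumes "invertible R" "R *v a = R *v b" shows "a = b"
  using assms minv_left by metis

lemma split_fact:
  fixes R \<Sigma> P :: "complex^'n^'n"
  assumes R: "invertible R" and SR: "\<And>w. \<Sigma> *v w = R *v (R *v w)"
  shows "(\<Sigma> + P) *v w = R *v ((mat 1 + matrix_inv R ** P ** matrix_inv R) *v (R *v w))"
    and "(\<Sigma> - P) *v w = R *v ((mat 1 - matrix_inv R ** P ** matrix_inv R) *v (R *v w))"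
  by (simp_all add: ipm matrix_vector_right_distrib matrix_vector_mult_diff_distrib
      matrix_vector_mult_add_rdistrib matrix_vector_mult_diff_rdistrib
      matrix_vector_mul_assoc[symmetric] minv_left[OF R] minv_right[OF R] SR)

lemma sum_inv:
  fixes R \<Sigma> P :: "complex^'n^'n"
  assumes R: "invertible R" and SR: "\<And>w. \<Sigma> *v w = R *v (R *v w)"
    and acc: "accr (matrix_inv R ** P ** matrix_inv R)"
  shows "invertible (\<Sigma> + P)"
  unfolding inv_ker
proof (intro allI impI)
  fix w assume "(\<Sigma> + P) *v w = 0"
  then have "R *v ((mat 1 + matrix_inv R ** P ** matrix_inv R) *v (R *v w)) = R *v 0"
    by (simp add: split_fact[OF R SR])
  then have "(mat 1 + matrix_inv R ** P ** matrix_inv R) *v (R *v w) = 0"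
    using inv_inj[OF R] by blast
  then have "R *v w = R *v 0" using cayley_inv[OF acc] inv_ker by auto
  then show "w = 0" using inv_inj[OF R] by blast
qed

lemma eig_main:
  fixes R \<Sigma> P1 P2 :: "complex^'n^'n"
  assumes R: "invertible R" and SR: "\<And>w. \<Sigma> *v w = R *v (R *v w)"
    and T1: "T1 = matrix_inv R ** P1 ** matrix_inv R"
    and T2: "T2 = matrix_inv R ** P2 ** matrix_inv R"
    and a1: "accr T1" and a2: "accr T2"
    and l: "l \<in> mat_spectrum (Gamma_PPS \<Sigma> P1 P2)"
  shows "\<exists>x. x \<noteq> 0 \<and>
     (matrix_inv ((mat 1 + T2) ** (mat 1 + T1)) ** ((mat 1 - T2) ** (mat 1 - T1))) *v x = l *s x \<and>
     norm l \<le> mval T1 T2 x \<and>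
     norm l \<le> mval T2 T1 (matrix_inv (mat 1 + T2) *v ((mat 1 - T1) *v x))"
proof -
  obtain v where v0: "v \<noteq> 0" and Gv: "Gamma_PPS \<Sigma> P1 P2 *v v = l *s v"
    using l unfolding mat_spectrum_def by blast
  have i1: "invertible (\<Sigma> + P1)" using sum_inv[OF R SR] a1 T1 by blast
  have i2: "invertible (\<Sigma> + P2)" using sum_inv[OF R SR] a2 T2 by blast
  have iT1: "invertible (mat 1 + T1)" by (rule cayley_inv[OF a1])
  have iT2: "invertible (mat 1 + T2)" by (rule cayley_inv[OF a2])
  define u where "u = matrix_inv (\<Sigma> + P2) *v ((\<Sigma> - P1) *v v)"
  have hu: "(\<Sigma> + P2) *v u = (\<Sigma> - P1) *v v" unfolding u_def by (rule minv_right[OF i2])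
  have "matrix_inv (\<Sigma> + P1) *v ((\<Sigma> - P2) *v u) = l *s v"
    using Gv unfolding Gamma_PPS_def u_def by (simp add: matrix_vector_mul_assoc matrix_mul_assoc)
  then have "(\<Sigma> + P1) *v (matrix_inv (\<Sigma> + P1) *v ((\<Sigma> - P2) *v u)) = (\<Sigma> + P1) *v (l *s v)"
    by simp
  then have hl: "(\<Sigma> - P2) *v u = l *s ((\<Sigma> + P1) *v v)"
    by (simp add: minv_right[OF i1] mvec_smult)
  define x where "x = R *v v"
  define z where "z = R *v u"
  have x0: "x \<noteq> 0" unfolding x_def using v0 inv_inj[OF R, of v 0] by auto
  have e1: "(mat 1 + T2) *v z = (mat 1 - T1) *v x"
    using hu unfolding split_fact[OF R SR] T1 T2 x_def z_def using inv_inj[OF R] by blast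
  have "R *v ((mat 1 - T2) *v z) = R *v (l *s ((mat 1 + T1) *v x))"
    using hl unfolding split_fact[OF R SR] T1 T2 x_def z_def by (simp add: mvec_smult)
  then have e2: "(mat 1 - T2) *v z = l *s ((mat 1 + T1) *v x)" using inv_inj[OF R] by blast
  have yz: "matrix_inv (mat 1 + T2) *v ((mat 1 - T1) *v x) = z"
    unfolding e1[symmetric] by (rule minv_left[OF iT2])
  have iTp: "invertible ((mat 1 + T2) ** (mat 1 + T1))" by (rule invertible_mult[OF iT2 iT1])
  have "((mat 1 - T2) ** (mat 1 - T1)) *v x = (mat 1 - T2) *v ((mat 1 + T2) *v z)"
    by (simp add: matrix_vector_mul_assoc[symmetric] e1)
  also have "\<dots> = (mat 1 + T2) *v ((mat 1 - T2) *v z)" by (rule cayley_comm)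
  also have "\<dots> = l *s (((mat 1 + T2) ** (mat 1 + T1)) *v x)"
    by (simp add: e2 mvec_smult matrix_vector_mul_assoc)
  finally have tm: "((mat 1 - T2) ** (mat 1 - T1)) *v x = l *s (((mat 1 + T2) ** (mat 1 + T1)) *v x)" .
  have "(matrix_inv ((mat 1 + T2) ** (mat 1 + T1)) ** ((mat 1 - T2) ** (mat 1 - T1))) *v x = l *s x"
    unfolding matrix_vector_mul_assoc[symmetric, of "matrix_inv ((mat 1 + T2) ** (mat 1 + T1))"] tm mvec_smult
      minv_left[OF iTp] ..
  moreover
  have nb: "norm ((mat 1 + T1) *v x) > 0"
    using x0 iT1 inv_ker by auto
  have b1: "norm l * norm ((mat 1 + T1) *v x) \<le> fmap T2 * norm ((mat 1 - T1) *v x)"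
    using fmap_bound[OF a2, of z] by (simp add: e1 e2 norm_smult_vec)
  have "norm l \<le> mval T1 T2 x"
    unfolding mval_eq[OF a1] using b1 nb by (simp add: pos_le_divide_eq mult_ac)
  moreover
  have "norm l \<le> mval T2 T1 z"
  proof (cases "(mat 1 - T1) *v x = 0")
    case True
    then have "(mat 1 + T2) *v z = 0" using e1 by simp
    then have "z = 0" using iT2 inv_ker by blast
    then have "l *s ((mat 1 + T1) *v x) = 0" using e2 by simp
    then have "l = 0" using nb by (auto simp: vec_eq_iff)
    then show ?thesis using mval_ge0[OF a2] by simp
  next
    case False
    then have na: "norm ((mat 1 - T1) *v x) > 0" by simp
    have b2: "norm ((mat 1 - T1) *v x) \<le> fmap T1 * norm ((mat 1 + T1) *v x)"
      by (rule fmap_bound[OF a1])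
    have "norm l * norm ((mat 1 - T1) *v x) \<le> norm l * (fmap T1 * norm ((mat 1 + T1) *v x))"
      using b2 by (simp add: mult_left_mono)
    then have "norm l \<le> fmap T1 * (norm l * norm ((mat 1 + T1) *v x)) / norm ((mat 1 - T1) *v x)"
      using na by (simp add: pos_le_divide_eq mult_ac)
    then show ?thesis
      unfolding mval_eq[OF a2] using e1 e2 by (simp add: norm_smult_vec mult_ac)
  qed
  ultimately show ?thesis using x0 yz by metis
qed


theorem theorem3p2:
  fixes A P1 P2 \<Sigma> :: "complex^'n^'n"
  assumes "invertible A"
    and "A = P1 + P2"
    and "psd_gen P1" and "psd_gen P2"
    and "hpd_mat \<Sigma>"
  defines "Sh \<equiv> matrix_inv (hpd_sqrt \<Sigma>)"
  defines "T1 \<equiv> Sh ** P1 ** Sh"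
  defines "T2 \<equiv> Sh ** P2 ** Sh"
  defines "Tp \<equiv> (mat 1 + T2) ** (mat 1 + T1)"
  defines "Tm \<equiv> (mat 1 - T2) ** (mat 1 - T1)"
  defines "E \<equiv> eigvecs (matrix_inv Tp ** Tm)"
  defines "y \<equiv> (\<lambda>x. matrix_inv (mat 1 + T2) *v ((mat 1 - T1) *v x))"
  shows "(\<forall>x. x \<noteq> 0 \<longrightarrow> mval T1 T2 x \<le> 1 \<and> mval T2 T1 x \<le> 1)
    \<and> (\<forall>l \<in> mat_spectrum (Gamma_PPS \<Sigma> P1 P2).
          \<exists>x \<in> E. norm l \<le> min (mval T1 T2 x) (mval T2 T1 (y x)))
    \<and> spec_radius (Gamma_PPS \<Sigma> P1 P2) \<le> (SUP x\<in>E. min (mval T1 T2 x) (mval T2 T1 (y x)))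
    \<and> (SUP x\<in>E. min (mval T1 T2 x) (mval T2 T1 (y x))) \<le> 1"
proof -
  define R where "R = hpd_sqrt \<Sigma>"
  have hR: "hpd_mat R" and RR: "R ** R = \<Sigma>"
    using hpd_sqrt_props[OF assms(5)] unfolding R_def by auto
  have Rinv: "invertible R"
    unfolding inv_ker
  proof (intro allI impI)
    fix w assume "R *v w = 0"
    then have "inner w (R *v w) = 0" by simp
    then show "w = 0" using hpd_pd[OF hR, of w] by (cases "w = 0") auto
  qed
  have SR: "\<Sigma> *v w = R *v (R *v w)" for w
    using RR by (simp add: matrix_vector_mul_assoc)
  have ShR: "Sh = matrix_inv R" unfolding Sh_def R_def ..
  have Shsym: "cinner a (Sh *v b) = cinner (Sh *v a) b" for a b
  proof -
    have "cinner a (Sh *v b) = cinner (R *v (Sh *v a)) (Sh *v b)"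
      unfolding ShR by (simp add: minv_right[OF Rinv])
    also have "\<dots> = cinner (Sh *v a) (R *v (Sh *v b))"
      using hpd_herm[OF hR] unfolding herm_def by simp
    also have "\<dots> = cinner (Sh *v a) b"
      unfolding ShR by (simp add: minv_right[OF Rinv])
    finally show ?thesis .
  qed
  have a1: "accr T1" unfolding T1_def by (rule accr_conj[OF Shsym psd_accr[OF assms(3)]])
  have a2: "accr T2" unfolding T2_def by (rule accr_conj[OF Shsym psd_accr[OF assms(4)]])
  have T1e: "T1 = matrix_inv R ** P1 ** matrix_inv R" unfolding T1_def ShR ..
  have T2e: "T2 = matrix_inv R ** P2 ** matrix_inv R" unfolding T2_def ShR ..
  define g where "g x = min (mval T1 T2 x) (mval T2 T1 (y x))" for x
  have g1: "g x \<le> 1" for x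
    unfolding g_def using mval_le1[OF a1 a2, of x] by simp
  have part1: "\<forall>x. x \<noteq> 0 \<longrightarrow> mval T1 T2 x \<le> 1 \<and> mval T2 T1 x \<le> 1"
    using mval_le1[OF a1 a2] mval_le1[OF a2 a1] by blast
  have part2: "\<forall>l \<in> mat_spectrum (Gamma_PPS \<Sigma> P1 P2). \<exists>x \<in> E. norm l \<le> g x"
  proof
    fix l assume l: "l \<in> mat_spectrum (Gamma_PPS \<Sigma> P1 P2)"
    obtain x where "x \<noteq> 0" "(matrix_inv Tp ** Tm) *v x = l *s x"
        "norm l \<le> mval T1 T2 x" "norm l \<le> mval T2 T1 (y x)"
      using eig_main[OF Rinv SR T1e T2e a1 a2 l]
      unfolding Tp_def Tm_def y_def by blast
    then show "\<exists>x \<in> E. norm l \<le> g x"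
      unfolding E_def eigvecs_def g_def by auto
  qed
  have bdd: "bdd_above (g ` E)" using g1 by (intro bdd_aboveI[where M=1]) auto
  have Ene: "E \<noteq> {}"
    using part2 spec_nonempty[of "Gamma_PPS \<Sigma> P1 P2"] by blast
  have part3: "spec_radius (Gamma_PPS \<Sigma> P1 P2) \<le> (SUP x\<in>E. g x)"
  proof -
    let ?S = "mat_spectrum (Gamma_PPS \<Sigma> P1 P2)"
    have "finite (norm ` ?S)" using spec_finite by blast
    moreover have "norm ` ?S \<noteq> {}" using spec_nonempty by blast
    ultimately have "Max (norm ` ?S) \<in> norm ` ?S" by (rule Max_in)
    then obtain l where l: "l \<in> ?S" "spec_radius (Gamma_PPS \<Sigma> P1 P2) = norm l"
      unfolding spec_radius_def by auto
    then obtain x where "x \<in> E" "norm l \<le> g x" using part2 by blast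
    then show ?thesis using l(2) cSUP_upper2[OF bdd] by metis
  qed
  have part4: "(SUP x\<in>E. g x) \<le> 1"
    using Ene g1 by (simp add: cSUP_least)
  show ?thesis
    using part1 part2 part3 part4 unfolding g_def by blast
qed


end
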